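(* Let $M$ be a monoid that satisfies, for every $n\ge1$, the identity $$xy_1^2y_2^2\cdots y_{n-1}^2y_n^2x\approx xy_1^2y_2^2\cdots y_{n-1}^2y_nxy_n.$$ If the $\lambda$-class $bta^+b^+$ is a $\lambda$-term for $M$, then $M$ is non-finitely based (the monoid variety generated by $M$ has no finite identity basis).
   Context: Words are elements of the free monoid $\mathfrak A^*$ over a countably infinite alphabet. Let $\tau_1$ be the congruence on $\mathfrak A^*$ generated by $a=aa$ for all letters $a$. Define $\mathbf u\,\lambda\,\mathbf v$ iff $\mathbf u\,\tau_1\,\mathbf v$, $\mathbf u,\mathbf v$ have the same set of letters occurring at least twice, and for each such letter its first two occurrences are adjacent in $\mathbf u$ iff they are adjacent in $\mathbf v$. The notation $bta^+b^+$ denotes the $\lambda$-class $\{bta^kb^m:k\ge2,m\ge1\}$. A $\lambda$-class $\mathtt u$ is a $\lambda$-term for $M$ if for every word $\mathbf u\in\mathtt u$ and every word $\mathbf v$ such that $M$ satisfies $\mathbf u\approx\mathbf v$, we have $\mathbf u\,\lambda\,\mathbf v$. *)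

theory Defs
  imports Main
begin

type_synonym word = "nat list"

definition word_eval :: "(nat \<Rightarrow> 'm::monoid_mult) \<Rightarrow> word \<Rightarrow> 'm" where
  "word_eval \<phi> w = prod_list (map \<phi> w)"

definition satisfies :: "'m::monoid_mult itself \<Rightarrow> word \<Rightarrow> word \<Rightarrow> bool" where
  "satisfies M u v \<longleftrightarrow> (\<forall>\<phi> :: nat \<Rightarrow> 'm. word_eval \<phi> u = word_eval \<phi> v)"

definition wsubst :: "(nat \<Rightarrow> word) \<Rightarrow> word \<Rightarrow> word" where
  "wsubst \<sigma> w = concat (map \<sigma> w)"

inductive derivable :: "(word \<times> word) set \<Rightarrow> word \<Rightarrow> word \<Rightarrow> bool" for \<Sigma> where
  ax: "(u, v) \<in> \<Sigma> \<Longrightarrow> derivable \<Sigma> u v"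
| refl: "derivable \<Sigma> u u"
| sym: "derivable \<Sigma> u v \<Longrightarrow> derivable \<Sigma> v u"
| trans: "derivable \<Sigma> u v \<Longrightarrow> derivable \<Sigma> v w \<Longrightarrow> derivable \<Sigma> u w"
| ctxt: "derivable \<Sigma> u v \<Longrightarrow> derivable \<Sigma> (p @ u @ q) (p @ v @ q)"
| subst: "derivable \<Sigma> u v \<Longrightarrow> derivable \<Sigma> (wsubst \<sigma> u) (wsubst \<sigma> v)"

definition finitely_based :: "'m::monoid_mult itself \<Rightarrow> bool" where
  "finitely_based M \<longleftrightarrow>
     (\<exists>\<Sigma>. finite \<Sigma> \<and> (\<forall>u v. satisfies M u v \<longleftrightarrow> derivable \<Sigma> u v))"

inductive tau1 :: "word \<Rightarrow> word \<Rightarrow> bool" where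
  gen: "tau1 (p @ [a] @ q) (p @ [a, a] @ q)"
| refl: "tau1 u u"
| sym: "tau1 u v \<Longrightarrow> tau1 v u"
| trans: "tau1 u v \<Longrightarrow> tau1 v w \<Longrightarrow> tau1 u w"

definition mult_letters :: "word \<Rightarrow> nat set" where
  "mult_letters w = {a. count_list w a \<ge> 2}"

definition first_two_adjacent :: "word \<Rightarrow> nat \<Rightarrow> bool" where
  "first_two_adjacent w a \<longleftrightarrow> (\<exists>p q. w = p @ [a, a] @ q \<and> a \<notin> set p)"

definition lambda_rel :: "word \<Rightarrow> word \<Rightarrow> bool" where
  "lambda_rel u v \<longleftrightarrow> tau1 u v \<and> mult_letters u = mult_letters v \<and>
     (\<forall>a \<in> mult_letters u. first_two_adjacent u a \<longleftrightarrow> first_two_adjacent v a)"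

definition is_lambda_term :: "'m::monoid_mult itself \<Rightarrow> word set \<Rightarrow> bool" where
  "is_lambda_term M U \<longleftrightarrow> (\<forall>u \<in> U. \<forall>v. satisfies M u v \<longrightarrow> lambda_rel u v)"

definition bta_class :: "nat \<Rightarrow> nat \<Rightarrow> nat \<Rightarrow> word set" where
  "bta_class b t a = {[b, t] @ replicate k a @ replicate m b | k m. k \<ge> 2 \<and> m \<ge> 1}"

text \<open>The identity x y1^2 ... y_{n-1}^2 y_n^2 x = x y1^2 ... y_{n-1}^2 y_n x y_n,
  with x = letter 0 and y_i = letter i.\<close>
definition sq_prefix :: "nat \<Rightarrow> word" where
  "sq_prefix n = [0] @ concat (map (\<lambda>i. [i, i]) [1..<n])"

end

theory Submission
  imports Defs
begin


lemma word_eval_append[simp]: "word_eval \<phi> (xs @ ys) = word_eval \<phi> xs * word_eval \<phi> ys"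
  by (simp add: word_eval_def)

lemma wsubst_append[simp]: "wsubst \<sigma> (xs @ ys) = wsubst \<sigma> xs @ wsubst \<sigma> ys"
  by (simp add: wsubst_def)

lemma wsubst_Cons[simp]: "wsubst \<sigma> (x # xs) = \<sigma> x @ wsubst \<sigma> xs"
  by (simp add: wsubst_def)

lemma wsubst_Nil[simp]: "wsubst \<sigma> [] = []"
  by (simp add: wsubst_def)

lemma word_eval_wsubst: "word_eval \<phi> (wsubst \<theta> l) = word_eval (\<lambda>c. word_eval \<phi> (\<theta> c)) l"
  by (induction l) (simp_all add: word_eval_def)

lemma wsubst_wsubst: "wsubst \<sigma> (wsubst \<tau> u) = wsubst (\<lambda>c. wsubst \<sigma> (\<tau> c)) u"
  by (induction u) simp_all

lemma wsubst_cong: "(\<And>c. c \<in> set l \<Longrightarrow> \<sigma> c = \<tau> c) \<Longrightarrow> wsubst \<sigma> l = wsubst \<tau> l"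
  by (induction l) simp_all

lemma wsubst_id[simp]: "wsubst (\<lambda>c. [c]) w = w"
  by (induction w) simp_all

lemma set_wsubst: "set (wsubst \<sigma> l) = (\<Union>c\<in>set l. set (\<sigma> c))"
  by (induction l) auto

lemma count_list_replicate[simp]: "count_list (replicate n x) y = (if x = y then n else 0)"
  by (induction n) auto

lemma satisfies_sym: "satisfies M l r \<Longrightarrow> satisfies M r l"
  by (simp add: satisfies_def)

lemma satisfies_ctxt_subst:
  "satisfies M l r \<Longrightarrow> satisfies M (P @ wsubst \<theta> l @ Q) (P @ wsubst \<theta> r @ Q)"
  unfolding satisfies_def by (simp add: word_eval_wsubst)

lemma satisfies_ctxt:
  "satisfies M l r \<Longrightarrow> satisfies M (P @ l @ Q) (P @ r @ Q)"
  unfolding satisfies_def by simp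

lemma tau1_remdups_adj: "tau1 u v \<Longrightarrow> remdups_adj u = remdups_adj v"
proof (induction rule: tau1.induct)
  case (gen p x q)
  have "remdups_adj (p @ x # q) = remdups_adj (p @ [x]) @ tl (remdups_adj (x # q))"
    by (rule remdups_adj_append)
  moreover have "remdups_adj (p @ x # (x # q)) = remdups_adj (p @ [x]) @ tl (remdups_adj (x # x # q))"
    by (rule remdups_adj_append)
  ultimately show ?case by simp
qed simp_all

lemma peel:
  assumes "remdups_adj v = x # rest"
  shows "\<exists>i v'. i \<ge> 1 \<and> v = replicate i x @ v' \<and> remdups_adj v' = rest"
proof -
  from assms obtain y ys where v: "v = y # ys" by (cases v) auto
  with assms have yx: "y = x" by (metis hd_remdups_adj list.sel(1))
  have r: "remdups_adj v = x # remdups_adj (dropWhile (\<lambda>z. z = x) ys)"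
    using v yx remdups_adj_Cons' by simp
  have tw: "takeWhile (\<lambda>z. z = x) ys = replicate (length (takeWhile (\<lambda>z. z = x) ys)) x"
    by (metis (mono_tags, lifting) replicate_length_same set_takeWhileD)
  have "v = replicate (Suc (length (takeWhile (\<lambda>z. z = x) ys))) x @ dropWhile (\<lambda>z. z = x) ys"
    using v yx tw by (metis append_Cons replicate_Suc takeWhile_dropWhile_id)
  moreover have "remdups_adj (dropWhile (\<lambda>z. z = x) ys) = rest" using r assms by simp
  ultimately show ?thesis by (intro exI[of _ "Suc _"] exI) auto
qed

locale bta_ctx =
  fixes M :: "'m::monoid_mult itself" and a b t :: nat
  assumes dist: "distinct [a, b, t]"
    and lterm: "is_lambda_term M (bta_class b t a)"
begin

lemma ab: "a \<noteq> b" and at: "a \<noteq> t" and bt: "b \<noteq> t"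
  using dist by auto

definition inB :: "word \<Rightarrow> bool" where
  "inB s \<longleftrightarrow> (\<exists>k m. 2 \<le> k \<and> 1 \<le> m \<and> s = [b, t] @ replicate k a @ replicate m b)"

lemma inB_class: "s \<in> bta_class b t a \<longleftrightarrow> inB s"
  unfolding bta_class_def inB_def by auto

lemma lambda_B:
  assumes u: "inB u" and lr: "lambda_rel u v"
  shows "inB v"
proof -
  from u obtain k m where k: "2 \<le> k" and m: "1 \<le> m" and
    uu: "u = [b, t] @ replicate k a @ replicate m b" unfolding inB_def by blast
  have ra: "remdups_adj (replicate k a @ replicate m b) = [a, b]"
    using k m ab by (subst remdups_adj_append') (auto simp: remdups_adj_replicate)
  have "remdups_adj u = remdups_adj [b, t] @ remdups_adj (replicate k a @ replicate m b)"
    unfolding uu using k at by (subst remdups_adj_append') auto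
  hence ru: "remdups_adj u = [b, t, a, b]" using ra bt by simp
  from lr have tv: "tau1 u v" and ml: "mult_letters u = mult_letters v"
    and fa: "\<forall>x\<in>mult_letters u. first_two_adjacent u x = first_two_adjacent v x"
    unfolding lambda_rel_def by auto
  have rv: "remdups_adj v = [b, t, a, b]" using tau1_remdups_adj[OF tv] ru by simp
  obtain i1 v1 where i1: "i1 \<ge> 1" and v1: "v = replicate i1 b @ v1" and r1: "remdups_adj v1 = [t, a, b]"
    using peel[OF rv] by blast
  obtain i2 v2 where i2: "i2 \<ge> 1" and v2: "v1 = replicate i2 t @ v2" and r2: "remdups_adj v2 = [a, b]"
    using peel[OF r1] by blast
  obtain i3 v3 where i3: "i3 \<ge> 1" and v3: "v2 = replicate i3 a @ v3" and r3: "remdups_adj v3 = [b]"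
    using peel[OF r2] by blast
  have v3r: "v3 = replicate (length v3) b" using remdups_adj_singleton[OF r3] .
  have v3ne: "length v3 \<ge> 1" using r3 by (cases v3) auto
  have vv: "v = replicate i1 b @ replicate i2 t @ replicate i3 a @ replicate (length v3) b"
    using v1 v2 v3 v3r by simp
  have ctu: "count_list u t = 1" using uu ab at bt by simp
  have cau: "count_list u a = k" using uu ab at by simp
  have cbu: "count_list u b = 1 + m" using uu ab bt by simp
  have "t \<notin> mult_letters u" using ctu unfolding mult_letters_def by simp
  hence "t \<notin> mult_letters v" using ml by simp
  hence ct: "count_list v t < 2" unfolding mult_letters_def by simp
  have "count_list v t = i2" using vv at bt by simp
  hence i2e: "i2 = 1" using ct i2 by simp
  have "a \<in> mult_letters u" using cau k unfolding mult_letters_def by simp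
  hence "a \<in> mult_letters v" using ml by simp
  hence "count_list v a \<ge> 2" unfolding mult_letters_def by simp
  moreover have "count_list v a = i3" using vv at ab by simp
  ultimately have i3e: "i3 \<ge> 2" by simp
  have bm: "b \<in> mult_letters u" using cbu m unfolding mult_letters_def by simp
  have nfu: "\<not> first_two_adjacent u b"
  proof
    assume "first_two_adjacent u b"
    then obtain p q where pq: "u = p @ [b, b] @ q" and bp: "b \<notin> set p"
      unfolding first_two_adjacent_def by blast
    show False
    proof (cases p)
      case Nil thus ?thesis using pq uu bt by simp
    next
      case (Cons x p') thus ?thesis using pq uu bp by simp
    qed
  qed
  hence nfv: "\<not> first_two_adjacent v b" using fa bm by simp
  have i1e: "i1 = 1"
  proof (rule ccontr)
    assume "i1 \<noteq> 1"
    hence "i1 \<ge> 2" using i1 by simp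
    define j where "j = i1 - 2"
    have ij: "i1 = Suc (Suc j)" using \<open>i1 \<ge> 2\<close> j_def by simp
    define R where "R = replicate j b @ replicate i2 t @ replicate i3 a @ replicate (length v3) b"
    have "v = [] @ [b, b] @ R" unfolding vv R_def ij by simp
    hence "first_two_adjacent v b" unfolding first_two_adjacent_def
      by (intro exI[of _ "[]"] exI[of _ R]) simp
    thus False using nfv by simp
  qed
  show ?thesis unfolding inB_def using vv i1e i2e i3e v3ne by auto
qed

lemma KT:
  assumes "satisfies M l r" and "inB (P @ wsubst \<theta> l @ Q)"
  shows "inB (P @ wsubst \<theta> r @ Q)"
proof -
  have s: "satisfies M (P @ wsubst \<theta> l @ Q) (P @ wsubst \<theta> r @ Q)"
    using satisfies_ctxt_subst[OF assms(1)] .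
  have "P @ wsubst \<theta> l @ Q \<in> bta_class b t a" using assms(2) inB_class by simp
  hence "lambda_rel (P @ wsubst \<theta> l @ Q) (P @ wsubst \<theta> r @ Q)"
    using lterm s unfolding is_lambda_term_def by blast
  thus ?thesis using lambda_B assms(2) by blast
qed

end



definition occP :: "('a \<Rightarrow> bool) \<Rightarrow> ('a \<Rightarrow> bool) \<Rightarrow> 'a list \<Rightarrow> bool" where
  "occP P Q w \<longleftrightarrow> (\<exists>X x Y y Z. w = X @ x # Y @ y # Z \<and> P x \<and> Q y)"

abbreviation occ2 :: "'a \<Rightarrow> 'a \<Rightarrow> 'a list \<Rightarrow> bool" where
  "occ2 x y w \<equiv> occP (\<lambda>c. c = x) (\<lambda>c. c = y) w"

lemma occP_Nil[simp]: "\<not> occP P Q []"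
  unfolding occP_def by auto

lemma occP_Cons: "occP P Q (c # w) \<longleftrightarrow> (P c \<and> (\<exists>y\<in>set w. Q y)) \<or> occP P Q w"
proof
  assume "occP P Q (c # w)"
  then obtain X x Y y Z where e: "c # w = X @ x # Y @ y # Z" and p: "P x" "Q y"
    unfolding occP_def by blast
  show "(P c \<and> (\<exists>y\<in>set w. Q y)) \<or> occP P Q w"
  proof (cases X)
    case Nil thus ?thesis using e p by auto
  next
    case (Cons x' X')
    hence "w = X' @ x # Y @ y # Z" using e by simp
    thus ?thesis using p unfolding occP_def by blast
  qed
next
  assume "(P c \<and> (\<exists>y\<in>set w. Q y)) \<or> occP P Q w"
  thus "occP P Q (c # w)"
  proof
    assume h: "P c \<and> (\<exists>y\<in>set w. Q y)"
    then obtain y where y: "y \<in> set w" "Q y" by blast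
    then obtain Y Z where "w = Y @ y # Z" by (meson split_list)
    hence "c # w = [] @ c # Y @ y # Z" by simp
    thus ?thesis using h y unfolding occP_def by blast
  next
    assume "occP P Q w"
    then obtain X x Y y Z where e: "w = X @ x # Y @ y # Z" and p: "P x" "Q y"
      unfolding occP_def by blast
    hence "c # w = (c # X) @ x # Y @ y # Z" by simp
    thus ?thesis using p unfolding occP_def by blast
  qed
qed

lemma occP_append: "occP P Q (A @ B) \<longleftrightarrow> occP P Q A \<or> occP P Q B \<or> ((\<exists>x\<in>set A. P x) \<and> (\<exists>y\<in>set B. Q y))"
  by (induction A) (auto simp: occP_Cons)

lemma occP_append_left: "occP P Q A \<Longrightarrow> occP P Q (A @ B)"
  by (simp add: occP_append)

lemma occP_append_right: "occP P Q B \<Longrightarrow> occP P Q (A @ B)"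
  by (simp add: occP_append)

lemma occP_wsubst:
  "occP P Q (wsubst \<sigma> r) \<longleftrightarrow> (\<exists>e\<in>set r. occP P Q (\<sigma> e)) \<or>
     occP (\<lambda>e. \<exists>x\<in>set (\<sigma> e). P x) (\<lambda>e. \<exists>y\<in>set (\<sigma> e). Q y) r"
  by (induction r) (auto simp: occP_append occP_Cons set_wsubst)

lemma occP_mono: "occP P Q w \<Longrightarrow> (\<And>x. P x \<Longrightarrow> P' x) \<Longrightarrow> (\<And>x. Q x \<Longrightarrow> Q' x) \<Longrightarrow> occP P' Q' w"
  unfolding occP_def by blast

lemma occ2_I: "w = X @ x # Y @ y # Z \<Longrightarrow> occ2 x y w"
  unfolding occP_def by blast

lemma occ2_same_count: "occ2 e e l \<longleftrightarrow> count_list l e \<ge> 2"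
proof
  assume "occ2 e e l"
  then obtain X Y Z where "l = X @ e # Y @ e # Z" unfolding occP_def by blast
  thus "count_list l e \<ge> 2" by simp
next
  assume "count_list l e \<ge> 2"
  define n where "n = count_list l e - 2"
  have c2: "count_list l e = Suc (Suc n)" using \<open>count_list l e \<ge> 2\<close> n_def by simp
  obtain X R where l: "l = X @ e # R" and c: "count_list R e = Suc n"
    using count_list_Suc_split_first[OF c2] by blast
  obtain Y Z where "R = Y @ e # Z" using count_list_Suc_split_first[OF c] by blast
  hence "l = X @ e # Y @ e # Z" using l by simp
  thus "occ2 e e l" by (rule occ2_I)
qed

lemma wsubst_single_count:
  "wsubst (\<lambda>c. if c = e then [x] else []) l = replicate (count_list l e) x"
  by (induction l) auto

context bta_ctx
begin

lemma inB_rep: "inB ([b, t] @ replicate N a @ [b]) \<longleftrightarrow> N \<ge> 2"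
proof
  assume "inB ([b, t] @ replicate N a @ [b])"
  then obtain k m where k: "2 \<le> k" and e: "[b, t] @ replicate N a @ [b] = [b, t] @ replicate k a @ replicate m b"
    unfolding inB_def by blast
  hence "count_list (replicate N a @ [b]) a = count_list (replicate k a @ replicate m b) a" by simp
  hence "N = k" using ab by simp
  thus "N \<ge> 2" using k by simp
next
  assume "N \<ge> 2"
  thus "inB ([b, t] @ replicate N a @ [b])" unfolding inB_def by (intro exI[of _ N] exI[of _ 1]) simp
qed

lemma count_transfer:
  assumes s: "satisfies M l r" and j: "count_list l e + j \<ge> 2"
  shows "count_list r e + j \<ge> 2"
proof -
  let ?\<theta> = "\<lambda>c. if c = e then [a] else []"
  have rj: "replicate n a @ replicate j a @ [b] = replicate (n + j) a @ [b]" for n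
    by (simp add: replicate_add)
  have eqw: "[b, t] @ wsubst ?\<theta> l @ (replicate j a @ [b]) = [b, t] @ replicate (count_list l e + j) a @ [b]"
    by (simp only: wsubst_single_count rj)
  have "inB ([b, t] @ replicate (count_list l e + j) a @ [b])" using j inB_rep by blast
  hence "inB ([b, t] @ wsubst ?\<theta> l @ (replicate j a @ [b]))"
    by (simp only: eqw)
  hence "inB ([b, t] @ wsubst ?\<theta> r @ (replicate j a @ [b]))" using KT[OF s] by blast
  hence "inB ([b, t] @ replicate (count_list r e + j) a @ [b])"
    by (simp only: wsubst_single_count rj)
  thus ?thesis using inB_rep by simp
qed

lemma content_transfer:
  assumes s: "satisfies M l r" and e: "e \<in> set l"
  shows "e \<in> set r"
proof -
  have "count_list l e \<noteq> 0" using e count_list_0_iff[of l e] by simp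
  hence "count_list l e + 1 \<ge> 2" by simp
  hence "count_list r e + 1 \<ge> 2" using count_transfer[OF s] by blast
  hence "count_list r e \<noteq> 0" by simp
  thus ?thesis using count_list_0_iff[of r e] by simp
qed

lemma NoBA: "replicate k a @ replicate m b = X @ b # Y @ a # Z \<Longrightarrow> False"
proof (induction k arbitrary: X)
  case 0
  have "set (replicate 0 a @ replicate m b) = set (X @ b # Y @ a # Z)" using 0 by (rule arg_cong)
  hence "a \<in> set (replicate m b)" by simp
  thus False using ab by simp
next
  case (Suc k)
  show False
  proof (cases X)
    case Nil thus False using Suc.prems ab by simp
  next
    case (Cons x X')
    have "a # (replicate k a @ replicate m b) = x # (X' @ b # Y @ a # Z)"
      using Suc.prems Cons by (simp only: replicate_Suc append_Cons)
    hence "replicate k a @ replicate m b = X' @ b # Y @ a # Z"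
      by (rule list.inject[THEN iffD1, THEN conjunct2])
    thus False by (rule Suc.IH)
  qed
qed

lemma sorted_ab:
  assumes "\<not> occ2 e1 e2 r" "e1 \<noteq> e2"
  shows "\<exists>i j. wsubst (\<lambda>c. if c = e2 then [a] else if c = e1 then [b] else []) r = replicate i a @ replicate j b"
  using assms(1)
proof (induction r)
  case Nil thus ?case by (intro exI[of _ 0]) simp
next
  case (Cons c r)
  let ?\<theta> = "\<lambda>c. if c = e2 then [a] else if c = e1 then [b] else []"
  have nr: "\<not> occ2 e1 e2 r" and nc: "\<not> (c = e1 \<and> e2 \<in> set r)"
    using Cons.prems by (auto simp: occP_Cons)
  obtain i j where ij: "wsubst ?\<theta> r = replicate i a @ replicate j b" using Cons.IH nr by blast
  show ?case
  proof (cases "c = e2")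
    case True
    thus ?thesis using ij by (intro exI[of _ "Suc i"] exI[of _ j]) simp
  next
    case False
    show ?thesis
    proof (cases "c = e1")
      case True
      hence "e2 \<notin> set r" using nc by simp
      hence "wsubst ?\<theta> r = wsubst (\<lambda>c. if c = e1 then [b] else []) r"
        by (intro wsubst_cong) auto
      hence "wsubst ?\<theta> r = replicate (count_list r e1) b" by (simp add: wsubst_single_count)
      hence "wsubst ?\<theta> (c # r) = replicate 0 a @ replicate (Suc (count_list r e1)) b"
        using True False assms(2) by simp
      thus ?thesis by blast
    next
      case False
      hence "wsubst ?\<theta> (c # r) = replicate i a @ replicate j b"
        using ij \<open>c \<noteq> e2\<close> by simp
      thus ?thesis by blast
    qed
  qed
qed

lemma order_transfer:
  assumes s: "satisfies M l r" and o: "occ2 e1 e2 l"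
  shows "occ2 e1 e2 r"
proof (cases "e1 = e2")
  case True
  hence "count_list l e1 + 0 \<ge> 2" using o occ2_same_count[of e1 l] by simp
  hence "count_list r e1 + 0 \<ge> 2" using count_transfer[OF s] by blast
  thus ?thesis using True occ2_same_count[of e1 r] by simp
next
  case False
  show ?thesis
  proof (rule ccontr)
    assume nr: "\<not> occ2 e1 e2 r"
    let ?\<theta> = "\<lambda>c. if c = e2 then [a] else if c = e1 then [b] else []"
    obtain i j where ij: "wsubst ?\<theta> r = replicate i a @ replicate j b" using sorted_ab[OF nr False] by blast
    have "[b, t, a, a] @ wsubst ?\<theta> r @ [b] = [b, t] @ replicate (Suc (Suc i)) a @ replicate (Suc j) b"
      using ij by (simp add: replicate_append_same)
    hence "inB ([b, t, a, a] @ wsubst ?\<theta> r @ [b])" unfolding inB_def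
      by (intro exI[of _ "Suc (Suc i)"] exI[of _ "Suc j"]) simp
    hence "inB ([b, t, a, a] @ wsubst ?\<theta> l @ [b])" using KT[OF satisfies_sym[OF s]] by blast
    then obtain k m where km: "[b, t, a, a] @ wsubst ?\<theta> l @ [b] = [b, t] @ replicate k a @ replicate m b"
      unfolding inB_def by blast
    obtain X Y Z where l: "l = X @ e1 # Y @ e2 # Z" using o unfolding occP_def by blast
    have wl: "wsubst ?\<theta> l = wsubst ?\<theta> X @ b # wsubst ?\<theta> Y @ a # wsubst ?\<theta> Z"
      using l False by simp
    have o1: "occ2 b a (wsubst ?\<theta> l)" unfolding wl by (rule occ2_I[OF HOL.refl])
    have "[b, t] @ ([a, a] @ wsubst ?\<theta> l @ [b]) = [b, t] @ (replicate k a @ replicate m b)"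
      using km by simp
    hence "[a, a] @ wsubst ?\<theta> l @ [b] = replicate k a @ replicate m b"
      by (rule same_append_eq[THEN iffD1])
    moreover have "occ2 b a ([a, a] @ wsubst ?\<theta> l @ [b])" by (rule occP_append_right, rule occP_append_left, rule o1)
    ultimately have "occ2 b a (replicate k a @ replicate m b)" by (simp only:)
    then obtain X' Y' Z' where "replicate k a @ replicate m b = X' @ b # Y' @ a # Z'"
      unfolding occP_def by blast
    thus False by (rule NoBA)
  qed
qed

lemma TL:
  assumes s: "satisfies M l r" and o: "occP P Q (wsubst \<sigma> l)"
  shows "occP P Q (wsubst \<sigma> r)"
proof -
  from o have "(\<exists>e\<in>set l. occP P Q (\<sigma> e)) \<or>
     occP (\<lambda>e. \<exists>x\<in>set (\<sigma> e). P x) (\<lambda>e. \<exists>y\<in>set (\<sigma> e). Q y) l"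
    by (simp add: occP_wsubst)
  thus ?thesis
  proof
    assume "\<exists>e\<in>set l. occP P Q (\<sigma> e)"
    then obtain e where "e \<in> set l" "occP P Q (\<sigma> e)" by blast
    moreover have "e \<in> set r" using content_transfer[OF s] \<open>e \<in> set l\<close> by blast
    ultimately have "\<exists>e\<in>set r. occP P Q (\<sigma> e)" by blast
    thus ?thesis by (subst occP_wsubst) (rule disjI1)
  next
    assume "occP (\<lambda>e. \<exists>x\<in>set (\<sigma> e). P x) (\<lambda>e. \<exists>y\<in>set (\<sigma> e). Q y) l"
    then obtain X e1 Y e2 Z where l: "l = X @ e1 # Y @ e2 # Z" and p: "\<exists>x\<in>set (\<sigma> e1). P x"
      and q: "\<exists>y\<in>set (\<sigma> e2). Q y" unfolding occP_def by blast
    have "occ2 e1 e2 l" using l by (rule occ2_I)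
    hence "occ2 e1 e2 r" by (rule order_transfer[OF s])
    then obtain R1 R2 R3 where rr: "r = R1 @ e1 # R2 @ e2 # R3" unfolding occP_def by blast
    have "occP (\<lambda>e. \<exists>x\<in>set (\<sigma> e). P x) (\<lambda>e. \<exists>y\<in>set (\<sigma> e). Q y) r"
      unfolding occP_def
      by (rule exI[of _ R1], rule exI[of _ e1], rule exI[of _ R2], rule exI[of _ e2], rule exI[of _ R3])
         (simp only: rr p q simp_thms)
    thus ?thesis by (subst occP_wsubst) (rule disjI2)
  qed
qed

end



definition J0 :: "word \<Rightarrow> bool" where
  "J0 w \<longleftrightarrow> (\<forall>i j. 0 < i \<longrightarrow> i < j \<longrightarrow> \<not> occ2 j i w)"

definition J2 :: "nat \<Rightarrow> word \<Rightarrow> bool" where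
  "J2 n w \<longleftrightarrow> (\<forall>i. 0 < i \<longrightarrow> i < n \<longrightarrow> occ2 0 i w)"

lemma wsubst_all_Nil: "(\<And>e. e \<in> set m \<Longrightarrow> wsubst g (\<sigma> e) = []) \<Longrightarrow> wsubst g (wsubst \<sigma> m) = []"
  by (induction m) simp_all

lemma two_copies:
  assumes j0: "J0 w" and w: "w = X @ s @ Y @ s @ Z" and i: "i \<in> set s" and j: "j \<in> set s"
    and i0: "0 < i" and ij: "i < j"
  shows False
proof -
  have "occ2 j i (s @ Y @ s)"
    using i j by (simp add: occP_append)
  note o = this
  have "occ2 j i (X @ (s @ Y @ s) @ Z)" by (rule occP_append_right, rule occP_append_left, rule o)
  hence "occ2 j i w" unfolding w by simp
  thus False using j0 i0 ij unfolding J0_def by blast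
qed

lemma occ2_setD: "occ2 x y w \<Longrightarrow> y \<in> set w"
  unfolding occP_def by auto

lemma occ2_setD1: "occ2 x y w \<Longrightarrow> x \<in> set w"
  unfolding occP_def by auto

lemma count_one_split:
  assumes "count_list l d = 1" and "l = A @ d # B"
  shows "d \<notin> set A" and "d \<notin> set B"
  using assms count_list_0_iff[of A d] count_list_0_iff[of B d] by simp_all

lemma count_two_occ:
  assumes "count_list l d \<ge> 2"
  obtains X Y Z where "l = X @ d # Y @ d # Z"
  using assms occ2_same_count[of d l] unfolding occP_def by blast

context bta_ctx
begin

definition hh :: "nat \<Rightarrow> nat \<Rightarrow> word" where
  "hh n c = (if c = 0 then [b] else if c = n then [a] else [])"

abbreviation H :: "nat \<Rightarrow> word \<Rightarrow> word" where
  "H n w \<equiv> wsubst (hh n) w"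

definition J1 :: "nat \<Rightarrow> word \<Rightarrow> bool" where
  "J1 n w \<longleftrightarrow> (\<exists>k m. 2 \<le> k \<and> 1 \<le> m \<and> H n w = b # replicate k a @ replicate m b)"

definition Inv :: "nat \<Rightarrow> word \<Rightarrow> bool" where
  "Inv n w \<longleftrightarrow> J0 w \<and> J1 n w \<and> J2 n w"

lemma hh0[simp]: "hh n 0 = [b]"
  by (simp add: hh_def)

lemma set_H: "set (H n w) \<subseteq> {a, b}"
  by (induction w) (auto simp: hh_def)

lemma t_notin_H: "t \<notin> set (H n w)"
  using set_H[of n w] at bt by blast

lemma b_in_H: "0 < n \<Longrightarrow> b \<in> set (H n w) \<longleftrightarrow> 0 \<in> set w"
  using ab by (induction w) (auto simp: hh_def)

lemma a_in_H: "0 < n \<Longrightarrow> a \<in> set (H n w) \<longleftrightarrow> n \<in> set w"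
  using ab by (induction w) (auto simp: hh_def)

lemma H_Nil: "0 < n \<Longrightarrow> H n w = [] \<longleftrightarrow> 0 \<notin> set w \<and> n \<notin> set w"
  by (induction w) (auto simp: hh_def)

lemma split_first: "X @ x # Y = x # Z \<Longrightarrow> x \<notin> set X \<Longrightarrow> X = [] \<and> Y = Z"
  by (cases X) auto

lemma split_t: "X @ t # Y = b # t # Z \<Longrightarrow> t \<notin> set X \<Longrightarrow> X = [b] \<and> Y = Z"
proof (cases X)
  case Nil
  assume "X @ t # Y = b # t # Z"
  thus ?thesis using Nil bt by simp
next
  case (Cons x X')
  assume e: "X @ t # Y = b # t # Z" and tX: "t \<notin> set X"
  hence "x = b" and e': "X' @ t # Y = t # Z" using Cons by simp_all
  have "t \<notin> set X'" using tX Cons by simp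
  hence "X' = [] \<and> Y = Z" using split_first[OF e'] by simp
  thus ?thesis using Cons \<open>x = b\<close> by simp
qed

lemma count_wsubst_t:
  assumes "\<And>c. c \<noteq> z \<Longrightarrow> t \<notin> set (\<theta> c)" and "count_list (\<theta> z) t = 1"
  shows "count_list (wsubst \<theta> r) t = count_list r z"
  using assms by (induction r) (auto simp: count_list_0_iff)

lemma TI:
  assumes s: "satisfies M l r" and j1: "J1 n (wsubst \<sigma> l)"
    and l: "l = l0 @ z # l1" and z0: "z \<notin> set l0" and z1: "z \<notin> set l1"
    and sz: "\<sigma> z = s1 @ s2" and h0: "H n (wsubst \<sigma> l0 @ s1) = [b]"
  shows "J1 n (wsubst \<sigma> r)"
proof -
  obtain k m where k: "2 \<le> k" and m: "1 \<le> m" and km: "H n (wsubst \<sigma> l) = b # replicate k a @ replicate m b"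
    using j1 unfolding J1_def by blast
  have e1: "H n (wsubst \<sigma> l) = H n (wsubst \<sigma> l0 @ s1) @ H n (s2 @ wsubst \<sigma> l1)"
    using l sz by simp
  have "[b] @ H n (s2 @ wsubst \<sigma> l1) = H n (wsubst \<sigma> l)"
    by (subst e1, subst h0, rule HOL.refl)
  hence hs2: "H n (s2 @ wsubst \<sigma> l1) = replicate k a @ replicate m b" using km by simp
  define \<theta> where "\<theta> c = (if c = z then H n s1 @ t # H n s2 else H n (\<sigma> c))" for c
  have th: "\<And>L. z \<notin> set L \<Longrightarrow> wsubst \<theta> L = H n (wsubst \<sigma> L)"
  proof -
    fix L assume "z \<notin> set L"
    hence "wsubst \<theta> L = wsubst (\<lambda>c. H n (\<sigma> c)) L"
      by (intro wsubst_cong) (auto simp: \<theta>_def)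
    thus "wsubst \<theta> L = H n (wsubst \<sigma> L)" by (simp add: wsubst_wsubst)
  qed
  have hl0: "H n (wsubst \<sigma> l0) @ H n s1 = [b]" using h0 by simp
  have "wsubst \<theta> l = H n (wsubst \<sigma> l0) @ (H n s1 @ t # H n s2) @ H n (wsubst \<sigma> l1)"
    using l th[OF z0] th[OF z1] by (simp add: \<theta>_def)
  also have "\<dots> = (H n (wsubst \<sigma> l0) @ H n s1) @ t # (H n s2 @ H n (wsubst \<sigma> l1))" by simp
  also have "\<dots> = [b, t] @ replicate k a @ replicate m b" using hl0 hs2 by simp
  finally have "inB ([] @ wsubst \<theta> l @ [])" unfolding inB_def using k m
    by (intro exI[of _ k] exI[of _ m]) simp
  hence "inB ([] @ wsubst \<theta> r @ [])" by (rule KT[OF s])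
  then obtain k' m' where k': "2 \<le> k'" and m': "1 \<le> m'"
    and r': "wsubst \<theta> r = [b, t] @ replicate k' a @ replicate m' b" unfolding inB_def by auto
  have "count_list (wsubst \<theta> r) t = count_list r z"
  proof (rule count_wsubst_t)
    show "\<And>c. c \<noteq> z \<Longrightarrow> t \<notin> set (\<theta> c)" using t_notin_H by (simp add: \<theta>_def)
    show "count_list (\<theta> z) t = 1" using t_notin_H count_list_0_iff by (simp add: \<theta>_def)
  qed
  moreover have "count_list (wsubst \<theta> r) t = 1" using r' at bt by simp
  ultimately have cz: "count_list r z = Suc 0" by simp
  obtain r0 r1 where r: "r = r0 @ z # r1" and zr0: "z \<notin> set r0" and cr1: "count_list r1 z = 0"
    using count_list_Suc_split_first[OF cz] by blast
  have zr1: "z \<notin> set r1" using cr1 count_list_0_iff[of r1 z] by simp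
  have "wsubst \<theta> r = H n (wsubst \<sigma> r0) @ (H n s1 @ t # H n s2) @ H n (wsubst \<sigma> r1)"
    using r th[OF zr0] th[OF zr1] by (simp add: \<theta>_def)
  hence "(H n (wsubst \<sigma> r0) @ H n s1) @ t # (H n s2 @ H n (wsubst \<sigma> r1)) = b # t # (replicate k' a @ replicate m' b)"
    using r' by simp
  moreover have "t \<notin> set (H n (wsubst \<sigma> r0) @ H n s1)" using t_notin_H by simp
  ultimately have sp: "H n (wsubst \<sigma> r0) @ H n s1 = [b] \<and> H n s2 @ H n (wsubst \<sigma> r1) = replicate k' a @ replicate m' b"
    by (rule split_t)
  have "H n (wsubst \<sigma> r) = (H n (wsubst \<sigma> r0) @ H n s1) @ (H n s2 @ H n (wsubst \<sigma> r1))"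
    using r sz by simp
  also have "\<dots> = b # replicate k' a @ replicate m' b" using sp by simp
  finally show ?thesis unfolding J1_def using k' m' by blast
qed

end



context bta_ctx
begin

lemma MJ1:
  assumes s: "satisfies M l r" and inv: "Inv n (wsubst \<sigma> l)" and card: "card (set l) + 1 \<le> n"
    and n0: "0 < n"
  shows "J1 n (wsubst \<sigma> r)"
proof -
  let ?w = "wsubst \<sigma> l"
  have j0: "J0 ?w" and j1: "J1 n ?w" and j2: "J2 n ?w" using inv unfolding Inv_def by auto
  obtain k m where k: "2 \<le> k" and m: "1 \<le> m" and km: "H n ?w = b # replicate k a @ replicate m b"
    using j1 unfolding J1_def by blast
  have "b \<in> set (H n ?w)" using km by simp
  hence "0 \<in> set ?w" using b_in_H[OF n0] by simp
  hence "\<exists>e\<in>set l. 0 \<in> set (\<sigma> e)" by (simp add: set_wsubst)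
  then obtain l0 c0 l1 where l: "l = l0 @ c0 # l1" and c00: "0 \<in> set (\<sigma> c0)"
    and nl0: "\<forall>e\<in>set l0. 0 \<notin> set (\<sigma> e)"
    by (rule split_list_first_propE)
  obtain \<alpha> \<beta> where sc0: "\<sigma> c0 = \<alpha> @ 0 # \<beta>" and na: "0 \<notin> set \<alpha>"
    using split_list_first[OF c00] by blast
  have n0l0: "0 \<notin> set (wsubst \<sigma> l0 @ \<alpha>)" using nl0 na by (simp add: set_wsubst)
  have e: "H n (wsubst \<sigma> l0 @ \<alpha>) @ b # H n (\<beta> @ wsubst \<sigma> l1) = b # (replicate k a @ replicate m b)"
    using l sc0 km by simp
  have "b \<notin> set (H n (wsubst \<sigma> l0 @ \<alpha>))" using b_in_H[OF n0] n0l0 by blast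
  hence sp: "H n (wsubst \<sigma> l0 @ \<alpha>) = [] \<and> H n (\<beta> @ wsubst \<sigma> l1) = replicate k a @ replicate m b"
    using split_first[OF e] by blast
  have hl0: "H n (wsubst \<sigma> l0) = []" and h\<alpha>: "H n \<alpha> = []" using sp by simp_all
  have c0l0: "c0 \<notin> set l0" using nl0 c00 by blast
  show ?thesis
  proof (cases "c0 \<in> set l1")
    case False
    have sz: "\<sigma> c0 = (\<alpha> @ [0]) @ \<beta>" using sc0 by simp
    have "H n (wsubst \<sigma> l0 @ (\<alpha> @ [0])) = [b]" using hl0 h\<alpha> by simp
    thus ?thesis by (rule TI[OF s j1 l c0l0 False sz])
  next
    case c0l1: True
    then obtain A C where l1: "l1 = A @ c0 # C" using split_list by metis
    have h\<beta>: "H n \<beta> = []"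
    proof (rule ccontr)
      assume ne: "H n \<beta> \<noteq> []"
      then obtain x xs where hb: "H n \<beta> = x # xs" by (cases "H n \<beta>") auto
      have "replicate k a @ replicate m b = H n \<beta> @ H n (wsubst \<sigma> l1)" using sp by simp
      also have "H n (wsubst \<sigma> l1) = H n (wsubst \<sigma> A) @ H n \<alpha> @ b # H n \<beta> @ H n (wsubst \<sigma> C)"
        using l1 sc0 by simp
      finally have eq: "replicate k a @ replicate m b = (x # xs) @ H n (wsubst \<sigma> A) @ b # (x # xs) @ H n (wsubst \<sigma> C)"
        using h\<alpha> hb by simp
      have "x \<in> {a, b}" using set_H[of n \<beta>] hb by auto
      thus False
      proof
        assume "x = a"
        hence "replicate k a @ replicate m b = ((x # xs) @ H n (wsubst \<sigma> A)) @ b # [] @ a # (xs @ H n (wsubst \<sigma> C))"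
          using eq by simp
        thus False by (rule NoBA)
      next
        assume "x \<in> {b}"
        hence xb: "x = b" by simp
        obtain k' where "k = Suc k'" using k by (cases k) auto
        hence "a = x" using eq by simp
        thus False using ab xb by simp
      qed
    qed
    have hc0: "H n (\<sigma> c0) = [b]" using sc0 h\<alpha> h\<beta> by simp
    have hl1: "H n (wsubst \<sigma> l1) = replicate k a @ replicate m b" using sp h\<beta> by simp
    define Q where "Q e \<longleftrightarrow> count_list l e = 1 \<or> H n (\<sigma> e) \<noteq> []" for e
    have "\<exists>e\<in>set l1. Q e"
    proof (rule ccontr)
      assume "\<not> (\<exists>e\<in>set l1. Q e)"
      hence "H n (wsubst \<sigma> l1) = []" by (intro wsubst_all_Nil) (auto simp: Q_def)
      thus False using hl1 k by simp
    qed
    then obtain mm d m2 where l1d: "l1 = mm @ d # m2" and Qd: "Q d" and nQ: "\<forall>e\<in>set mm. \<not> Q e"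
      by (rule split_list_first_propE)
    have hmm: "H n (wsubst \<sigma> mm) = []" using nQ by (intro wsubst_all_Nil) (auto simp: Q_def)
    have lsplit: "l = (l0 @ c0 # mm) @ d # m2" using l l1d by simp
    show ?thesis
    proof (cases "count_list l d = 1")
      case True
      have d1: "d \<notin> set (l0 @ c0 # mm)" and d2: "d \<notin> set m2"
        using count_one_split[OF True lsplit] by auto
      have sz: "\<sigma> d = [] @ \<sigma> d" by simp
      have "H n (wsubst \<sigma> (l0 @ c0 # mm) @ []) = [b]" using hl0 hc0 hmm by simp
      thus ?thesis by (rule TI[OF s j1 lsplit d1 d2 sz])
    next
      case False
      have hd: "H n (\<sigma> d) \<noteq> []" using Qd False by (simp add: Q_def)
      have dl: "d \<in> set l" using l l1d by simp
      have "count_list l d \<noteq> 0" using dl count_list_0_iff[of l d] by simp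
      hence d2: "count_list l d \<ge> 2" using False by simp
      have eqd: "replicate k a @ replicate m b = H n (\<sigma> d) @ H n (wsubst \<sigma> m2)"
        using hl1 l1d hmm by simp
      obtain y ys where hdy: "H n (\<sigma> d) = y # ys" using hd by (cases "H n (\<sigma> d)") auto
      obtain k' where "k = Suc k'" using k by (cases k) auto
      hence ya: "y = a" using eqd hdy by simp
      hence "a \<in> set (H n (\<sigma> d))" using hdy by simp
      hence nd: "n \<in> set (\<sigma> d)" using a_in_H[OF n0] by simp
      have c0mm: "c0 \<notin> set mm" using nQ hc0 by (auto simp: Q_def)
      have c0d: "c0 \<noteq> d" using hc0 hdy ya ab by auto
      have c0m2: "c0 \<in> set m2" using c0l1 l1d c0mm c0d by simp
      have wdec: "?w = (wsubst \<sigma> l0 @ \<sigma> c0 @ wsubst \<sigma> mm) @ \<sigma> d @ wsubst \<sigma> m2"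
        using l l1d by simp
      have w2: "?w = wsubst \<sigma> l0 @ (\<sigma> c0 @ wsubst \<sigma> mm @ \<sigma> d @ wsubst \<sigma> m2)"
        using l l1d by simp
      have nz: "0 \<notin> set (wsubst \<sigma> l0)" using n0l0 by simp
      have cover: "\<exists>e\<in>set mm. i \<in> set (\<sigma> e)" if i0: "0 < i" and iN: "i < n" for i
      proof -
        have o: "occ2 0 i ?w" using j2 i0 iN unfolding J2_def by blast
        have notm2: "i \<notin> set (wsubst \<sigma> m2)"
        proof
          assume "i \<in> set (wsubst \<sigma> m2)"
          hence "occ2 n i (\<sigma> d @ wsubst \<sigma> m2)" using nd by (simp add: occP_append)
          hence "occ2 n i ((wsubst \<sigma> l0 @ \<sigma> c0 @ wsubst \<sigma> mm) @ \<sigma> d @ wsubst \<sigma> m2)"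
            by (rule occP_append_right)
          hence "occ2 n i ?w" using wdec by simp
          thus False using j0 i0 iN unfolding J0_def by blast
        qed
        have notd: "i \<notin> set (\<sigma> d)"
        proof
          assume id: "i \<in> set (\<sigma> d)"
          obtain X Y Z where "l = X @ d # Y @ d # Z" using d2 by (rule count_two_occ)
          hence "?w = wsubst \<sigma> X @ \<sigma> d @ wsubst \<sigma> Y @ \<sigma> d @ wsubst \<sigma> Z" by simp
          thus False by (rule two_copies[OF j0 _ id nd i0 iN])
        qed
        have notc0: "i \<notin> set (\<sigma> c0)" using notm2 c0m2 by (auto simp: set_wsubst)
        have "occ2 0 i (wsubst \<sigma> l0 @ (\<sigma> c0 @ wsubst \<sigma> mm @ \<sigma> d @ wsubst \<sigma> m2))"
          using o w2 by simp
        hence "occ2 0 i (wsubst \<sigma> l0) \<or> occ2 0 i (\<sigma> c0 @ wsubst \<sigma> mm @ \<sigma> d @ wsubst \<sigma> m2) \<or>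
            ((\<exists>x\<in>set (wsubst \<sigma> l0). x = 0) \<and> (\<exists>y\<in>set (\<sigma> c0 @ wsubst \<sigma> mm @ \<sigma> d @ wsubst \<sigma> m2). y = i))"
          by (simp only: occP_append)
        moreover have "\<not> occ2 0 i (wsubst \<sigma> l0)" using nz occ2_setD1 by metis
        ultimately have "occ2 0 i (\<sigma> c0 @ wsubst \<sigma> mm @ \<sigma> d @ wsubst \<sigma> m2)"
          using nz by blast
        hence "i \<in> set (\<sigma> c0 @ wsubst \<sigma> mm @ \<sigma> d @ wsubst \<sigma> m2)" by (rule occ2_setD)
        hence "i \<in> set (wsubst \<sigma> mm)" using notm2 notd notc0 by simp
        thus "\<exists>e\<in>set mm. i \<in> set (\<sigma> e)" by (simp add: set_wsubst)
      qed
      have uniq: False if e: "e \<in> set mm" and i: "i \<in> set (\<sigma> e)" and j: "j \<in> set (\<sigma> e)"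
        and i0: "0 < i" and ij: "i < j" for e i j
      proof -
        have "count_list l e \<noteq> 1" using nQ e by (simp add: Q_def)
        moreover have "e \<in> set l" using e l l1d by simp
        hence "count_list l e \<noteq> 0" using count_list_0_iff[of l e] by simp
        ultimately have "count_list l e \<ge> 2" by simp
        then obtain X Y Z where "l = X @ e # Y @ e # Z" by (rule count_two_occ)
        hence "?w = wsubst \<sigma> X @ \<sigma> e @ wsubst \<sigma> Y @ \<sigma> e @ wsubst \<sigma> Z" by simp
        thus False by (rule two_copies[OF j0 _ i j i0 ij])
      qed
      define f where "f i = (SOME e. e \<in> set mm \<and> i \<in> set (\<sigma> e))" for i
      have fP: "f i \<in> set mm \<and> i \<in> set (\<sigma> (f i))" if "0 < i" "i < n" for i
      proof -
        have "\<exists>e. e \<in> set mm \<and> i \<in> set (\<sigma> e)" using cover[OF that] by blast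
        thus ?thesis unfolding f_def by (rule someI_ex)
      qed
      have inj: "inj_on f {1..<n}"
      proof (rule inj_onI)
        fix i j assume i: "i \<in> {1..<n}" and j: "j \<in> {1..<n}" and fij: "f i = f j"
        have fi: "f i \<in> set mm" "i \<in> set (\<sigma> (f i))" using fP[of i] i by auto
        have fj: "j \<in> set (\<sigma> (f i))" using fP[of j] j fij by auto
        show "i = j"
        proof (rule ccontr)
          assume "i \<noteq> j"
          hence "i < j \<or> j < i" by arith
          thus False
          proof
            assume "i < j" thus False using uniq[OF fi(1) fi(2) fj] i by simp
          next
            assume "j < i" thus False using uniq[OF fi(1) fj fi(2)] j by simp
          qed
        qed
      qed
      have "f ` {1..<n} \<subseteq> set mm" using fP by auto
      hence "card {1..<n} \<le> card (set mm)" using card_inj_on_le[OF inj] by simp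
      hence c1: "n - 1 \<le> card (set mm)" by simp
      have "set mm \<subset> set l" using l l1d c0mm by auto
      hence "card (set mm) < card (set l)" by (rule psubset_card_mono[OF finite_set])
      hence False using c1 card by simp
      thus ?thesis ..
    qed
  qed
qed

end



definition sqc :: "nat \<Rightarrow> word" where
  "sqc n = concat (map (\<lambda>i. [i, i]) [1..<n])"

lemma sq_prefix_sqc: "sq_prefix n = 0 # sqc n"
  by (simp add: sq_prefix_def sqc_def)

lemma set_sqc: "set (sqc n) = {1..<n}"
  by (auto simp: sqc_def)

lemma occ_sqc: "occ2 j i (sqc n) \<Longrightarrow> j \<le> i"
proof (induction n)
  case 0 thus ?case by (simp add: sqc_def)
next
  case (Suc n)
  show ?case
  proof (cases "n = 0")
    case True thus ?thesis using Suc.prems by (simp add: sqc_def)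
  next
    case False
    hence e: "sqc (Suc n) = sqc n @ [n, n]" by (simp add: sqc_def)
    have "occ2 j i (sqc n) \<or> occ2 j i [n, n] \<or> ((\<exists>x\<in>set (sqc n). x = j) \<and> (\<exists>y\<in>set [n, n]. y = i))"
      using Suc.prems unfolding e by (simp only: occP_append)
    thus ?thesis
    proof (elim disjE)
      assume "occ2 j i (sqc n)" thus ?thesis by (rule Suc.IH)
    next
      assume "occ2 j i [n, n]"
      hence "j \<in> set [n, n]" "i \<in> set [n, n]" by (auto dest: occ2_setD occ2_setD1)
      thus ?thesis by simp
    next
      assume "(\<exists>x\<in>set (sqc n). x = j) \<and> (\<exists>y\<in>set [n, n]. y = i)"
      thus ?thesis by (auto simp: set_sqc)
    qed
  qed
qed

lemma J0_W: "J0 (sq_prefix n @ [n, n, 0])"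
  unfolding J0_def
proof (intro allI impI notI)
  fix i j assume i0: "0 < i" and ij: "i < j" and o: "occ2 j i (sq_prefix n @ [n, n, 0])"
  have "occ2 j i ([0] @ (sqc n @ [n, n, 0]))" using o by (simp add: sq_prefix_sqc)
  hence "occ2 j i [0] \<or> occ2 j i (sqc n @ [n, n, 0]) \<or> ((\<exists>x\<in>set [0]. x = j) \<and> (\<exists>y\<in>set (sqc n @ [n, n, 0]). y = i))"
    by (simp only: occP_append)
  moreover have "\<not> occ2 j i [0]" using occ2_setD occ2_setD1 i0 ij by fastforce
  moreover have "\<not> (\<exists>x\<in>set [0]. x = j)" using i0 ij by simp
  ultimately have o2: "occ2 j i (sqc n @ [n, n, 0])" by blast
  hence "occ2 j i (sqc n) \<or> occ2 j i [n, n, 0] \<or> ((\<exists>x\<in>set (sqc n). x = j) \<and> (\<exists>y\<in>set [n, n, 0]. y = i))"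
    by (simp only: occP_append)
  thus False
  proof (elim disjE)
    assume "occ2 j i (sqc n)" thus False using occ_sqc ij by fastforce
  next
    assume oo: "occ2 j i [n, n, 0]"
    hence "j \<in> set [n, n, 0]" "i \<in> set [n, n, 0]" by (auto dest: occ2_setD occ2_setD1)
    thus False using i0 ij by auto
  next
    assume "(\<exists>x\<in>set (sqc n). x = j) \<and> (\<exists>y\<in>set [n, n, 0]. y = i)"
    thus False using i0 ij by (auto simp: set_sqc)
  qed
qed

lemma J2_W: "J2 n (sq_prefix n @ [n, n, 0])"
  unfolding J2_def
proof (intro allI impI)
  fix i assume "0 < i" "i < n"
  hence "i \<in> set (sqc n)" by (simp add: set_sqc)
  then obtain Y Z where "sqc n = Y @ i # Z" by (meson split_list)
  hence "sq_prefix n @ [n, n, 0] = [] @ 0 # Y @ i # (Z @ [n, n, 0])" by (simp add: sq_prefix_sqc)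
  thus "occ2 0 i (sq_prefix n @ [n, n, 0])" by (rule occ2_I)
qed

context bta_ctx
begin

lemma H_sqc: "0 < n \<Longrightarrow> H n (sqc n) = []"
  by (simp add: H_Nil set_sqc)

lemma J1_W: "0 < n \<Longrightarrow> J1 n (sq_prefix n @ [n, n, 0])"
  unfolding J1_def
  by (intro exI[of _ 2] exI[of _ 1]) (simp add: sq_prefix_sqc H_sqc hh_def numeral_2_eq_2)

lemma not_J1_W': "0 < n \<Longrightarrow> \<not> J1 n (sq_prefix n @ [n, 0, n])"
proof
  assume n0: "0 < n" and "J1 n (sq_prefix n @ [n, 0, n])"
  then obtain k m where km: "H n (sq_prefix n @ [n, 0, n]) = b # replicate k a @ replicate m b"
    unfolding J1_def by blast
  have "H n (sq_prefix n @ [n, 0, n]) = [b, a, b, a]"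
    using n0 by (simp add: sq_prefix_sqc H_sqc hh_def)
  hence "replicate k a @ replicate m b = [a] @ b # [] @ a # []" using km by simp
  thus False by (rule NoBA)
qed

lemma MainStep:
  assumes s: "satisfies M l r" and inv: "Inv n (wsubst \<sigma> l)" and card: "card (set l) + 1 \<le> n"
    and n0: "0 < n"
  shows "Inv n (wsubst \<sigma> r)"
proof -
  have j0: "J0 (wsubst \<sigma> l)" and j2: "J2 n (wsubst \<sigma> l)" using inv unfolding Inv_def by auto
  have "J0 (wsubst \<sigma> r)" unfolding J0_def
  proof (intro allI impI notI)
    fix i j assume "0 < i" "i < j" "occ2 j i (wsubst \<sigma> r)"
    hence "occ2 j i (wsubst \<sigma> l)" using TL[OF satisfies_sym[OF s]] by blast
    thus False using j0 \<open>0 < i\<close> \<open>i < j\<close> unfolding J0_def by blast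
  qed
  moreover have "J2 n (wsubst \<sigma> r)" unfolding J2_def
  proof (intro allI impI)
    fix i assume "0 < i" "i < n"
    hence "occ2 0 i (wsubst \<sigma> l)" using j2 unfolding J2_def by blast
    thus "occ2 0 i (wsubst \<sigma> r)" using TL[OF s] by blast
  qed
  moreover have "J1 n (wsubst \<sigma> r)" by (rule MJ1[OF s inv card n0])
  ultimately show ?thesis unfolding Inv_def by blast
qed

lemma MainStep_ctx:
  assumes s: "satisfies M l r" and inv: "Inv n (p @ wsubst \<sigma> l @ q)" and card: "card (set l) + 3 \<le> n"
    and n0: "0 < n"
  shows "Inv n (p @ wsubst \<sigma> r @ q)"
proof -
  define \<alpha> where "\<alpha> = Suc (Max (set l \<union> set r))"
  define \<beta> where "\<beta> = Suc \<alpha>"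
  have fresh: "c < \<alpha>" if "c \<in> set l \<union> set r" for c
  proof -
    have "c \<le> Max (set l \<union> set r)" using that by (intro Max_ge) auto
    thus ?thesis unfolding \<alpha>_def by simp
  qed
  define \<sigma>' where "\<sigma>' = \<sigma>(\<alpha> := p, \<beta> := q)"
  have eq: "wsubst \<sigma>' ([\<alpha>] @ L @ [\<beta>]) = p @ wsubst \<sigma> L @ q" if "set L \<subseteq> set l \<union> set r" for L
  proof -
    have "wsubst \<sigma>' L = wsubst \<sigma> L"
    proof (rule wsubst_cong)
      fix c assume "c \<in> set L"
      hence "c < \<alpha>" using that fresh by blast
      thus "\<sigma>' c = \<sigma> c" unfolding \<sigma>'_def \<beta>_def by simp
    qed
    moreover have "\<sigma>' \<alpha> = p" "\<sigma>' \<beta> = q" unfolding \<sigma>'_def \<beta>_def by simp_all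
    ultimately show ?thesis by simp
  qed
  have s': "satisfies M ([\<alpha>] @ l @ [\<beta>]) ([\<alpha>] @ r @ [\<beta>])" by (rule satisfies_ctxt[OF s])
  have "card (set ([\<alpha>] @ l @ [\<beta>])) \<le> card (set l) + 2"
    by (simp add: card_insert_if)
  hence c': "card (set ([\<alpha>] @ l @ [\<beta>])) + 1 \<le> n" using card by simp
  have "Inv n (wsubst \<sigma>' ([\<alpha>] @ l @ [\<beta>]))" using inv eq[of l] by simp
  hence "Inv n (wsubst \<sigma>' ([\<alpha>] @ r @ [\<beta>]))" by (rule MainStep[OF s' _ c' n0])
  thus ?thesis using eq[of r] by simp
qed

lemma inv_deriv:
  assumes d: "derivable \<Sigma> u v"
    and ax: "\<And>l r. (l, r) \<in> \<Sigma> \<Longrightarrow> satisfies M l r \<and> card (set l) + 3 \<le> n \<and> card (set r) + 3 \<le> n"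
    and n0: "0 < n"
  shows "Inv n (p @ wsubst \<sigma> u @ q) \<longleftrightarrow> Inv n (p @ wsubst \<sigma> v @ q)"
  using d
proof (induction arbitrary: p \<sigma> q)
  case (ax u v)
  have s: "satisfies M u v" and cu: "card (set u) + 3 \<le> n" and cv: "card (set v) + 3 \<le> n"
    using assms(2)[OF ax.hyps] by auto
  show ?case
  proof
    assume "Inv n (p @ wsubst \<sigma> u @ q)"
    thus "Inv n (p @ wsubst \<sigma> v @ q)" by (rule MainStep_ctx[OF s _ cu n0])
  next
    assume "Inv n (p @ wsubst \<sigma> v @ q)"
    thus "Inv n (p @ wsubst \<sigma> u @ q)" by (rule MainStep_ctx[OF satisfies_sym[OF s] _ cv n0])
  qed
next
  case (refl u) show ?case by simp
next
  case (sym u v) thus ?case by simp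
next
  case (trans u v w) thus ?case by simp
next
  case (ctxt u v p0 q0)
  have "Inv n ((p @ wsubst \<sigma> p0) @ wsubst \<sigma> u @ (wsubst \<sigma> q0 @ q)) \<longleftrightarrow>
        Inv n ((p @ wsubst \<sigma> p0) @ wsubst \<sigma> v @ (wsubst \<sigma> q0 @ q))" by (rule ctxt.IH)
  thus ?case by simp
next
  case (subst u v \<tau>)
  have "Inv n (p @ wsubst (\<lambda>c. wsubst \<sigma> (\<tau> c)) u @ q) \<longleftrightarrow>
        Inv n (p @ wsubst (\<lambda>c. wsubst \<sigma> (\<tau> c)) v @ q)" by (rule subst.IH)
  thus ?case by (simp add: wsubst_wsubst)
qed

lemma Inv_W: "0 < n \<Longrightarrow> Inv n (sq_prefix n @ [n, n, 0])"
  unfolding Inv_def using J0_W J1_W J2_W by blast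

lemma not_Inv_W': "0 < n \<Longrightarrow> \<not> Inv n (sq_prefix n @ [n, 0, n])"
  unfolding Inv_def using not_J1_W' by blast

end

theorem mainTheorem11:
  fixes M :: "'m::monoid_mult itself" and a b t :: nat
  assumes ident: "\<And>n. n \<ge> 1 \<Longrightarrow>
      satisfies M (sq_prefix n @ [n, n, 0]) (sq_prefix n @ [n, 0, n])"
    and distinct: "distinct [a, b, t]"
    and lterm: "is_lambda_term M (bta_class b t a)"
  shows "\<not> finitely_based M"
proof
  assume "finitely_based M"
  then obtain \<Sigma> where fin: "finite \<Sigma>" and iff: "\<forall>u v. satisfies M u v \<longleftrightarrow> derivable \<Sigma> u v"
    unfolding finitely_based_def by blast
  interpret bta_ctx M a b t using distinct lterm by unfold_locales
  define K where "K = Max (insert 0 ((\<lambda>p. card (set (fst p)) + card (set (snd p))) ` \<Sigma>))"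
  have Kb: "card (set l) + card (set r) \<le> K" if "(l, r) \<in> \<Sigma>" for l r
  proof -
    have "card (set (fst (l, r))) + card (set (snd (l, r))) \<in> insert 0 ((\<lambda>p. card (set (fst p)) + card (set (snd p))) ` \<Sigma>)"
      using that by blast
    hence "card (set (fst (l, r))) + card (set (snd (l, r))) \<le> K" unfolding K_def
      using fin by (intro Max_ge) auto
    thus ?thesis by simp
  qed
  define n where "n = K + 3"
  have n0: "0 < n" unfolding n_def by simp
  have ax: "satisfies M l r \<and> card (set l) + 3 \<le> n \<and> card (set r) + 3 \<le> n" if "(l, r) \<in> \<Sigma>" for l r
  proof -
    have "derivable \<Sigma> l r" using that by (rule derivable.ax)
    hence "satisfies M l r" using iff by blast
    thus ?thesis using Kb[OF that] unfolding n_def by simp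
  qed
  have "satisfies M (sq_prefix n @ [n, n, 0]) (sq_prefix n @ [n, 0, n])" using ident n0 by simp
  hence d: "derivable \<Sigma> (sq_prefix n @ [n, n, 0]) (sq_prefix n @ [n, 0, n])" using iff by blast
  have "Inv n ([] @ wsubst (\<lambda>c. [c]) (sq_prefix n @ [n, n, 0]) @ []) \<longleftrightarrow>
        Inv n ([] @ wsubst (\<lambda>c. [c]) (sq_prefix n @ [n, 0, n]) @ [])"
    by (rule inv_deriv[OF d ax n0])
  thus False using Inv_W[OF n0] not_Inv_W'[OF n0] by simp
qed


end
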